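(* Let $\mathcal A$ be a finite set, let $R:\mathcal A\to\mathbb R$ and $\hat R_t:\mathcal A\to\mathbb R$ be arbitrary functions, let $a^*\in\mathcal A$ maximize $R$, and let $\gamma_t>0$. Define $\Delta(a)=R(a^* )-R(a)$ and $\hat\Delta_t(a)=\hat R_t(a^* )-\hat R_t(a)$, and for a distribution $\rho$ on $\mathcal A$, $\Delta(\rho)=\sum_a\rho(a)\Delta(a)$, $\hat\Delta_t(\rho)=\sum_a\rho(a)\hat\Delta_t(a)$. Let $$\mu_t^{exp}(a)=\frac{e^{\gamma_tR(a)}}{\sum_{a'}e^{\gamma_tR(a')}},\qquad\rho_t^{exp}(a)=\frac{e^{\gamma_t\hat R_t(a)}}{\sum_{a'}e^{\gamma_t\hat R_t(a')}}.$$ Then $$KL(\rho_t^{exp}\|\mu_t^{exp})\le\gamma_t\Big(\big[\Delta(\rho_t^{exp})-\hat\Delta_t(\rho_t^{exp})\big]+\big[\hat\Delta_t(\mu_t^{exp})-\Delta(\mu_t^{exp})\big]\Big).$$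
   Context: $KL(\rho\|\mu)=\sum_a\rho(a)\ln\frac{\rho(a)}{\mu(a)}$ is the Kullback–Leibler divergence. In the paper $R(a)$ is the expected reward of arm $a$ and $\hat R_t(a)$ an importance-weighted empirical estimate, but the inequality holds for arbitrary real values. *)

theory Defs
  imports Complex_Main
begin

definition KL :: "'a set \<Rightarrow> ('a \<Rightarrow> real) \<Rightarrow> ('a \<Rightarrow> real) \<Rightarrow> real" where
  "KL A rho mu = (\<Sum>a\<in>A. rho a * ln (rho a / mu a))"

definition softmax :: "'a set \<Rightarrow> real \<Rightarrow> ('a \<Rightarrow> real) \<Rightarrow> 'a \<Rightarrow> real" where
  "softmax A g R a = exp (g * R a) / (\<Sum>a'\<in>A. exp (g * R a'))"

definition gap :: "('a \<Rightarrow> real) \<Rightarrow> 'a \<Rightarrow> 'a \<Rightarrow> real" where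
  "gap R astar a = R astar - R a"

definition avg_gap :: "'a set \<Rightarrow> ('a \<Rightarrow> real) \<Rightarrow> 'a \<Rightarrow> ('a \<Rightarrow> real) \<Rightarrow> real" where
  "avg_gap A R astar rho = (\<Sum>a\<in>A. rho a * gap R astar a)"

end

theory Submission
  imports Defs
begin

theorem lemma5:
  fixes A :: "'a set" and R Rhat :: "'a \<Rightarrow> real" and astar :: 'a and \<gamma> :: real
  assumes "finite A"
    and "astar \<in> A"
    and "\<forall>a\<in>A. R a \<le> R astar"
    and "\<gamma> > 0"
  shows "KL A (softmax A \<gamma> Rhat) (softmax A \<gamma> R)
    \<le> \<gamma> * ((avg_gap A R astar (softmax A \<gamma> Rhat) - avg_gap A Rhat astar (softmax A \<gamma> Rhat))
          + (avg_gap A Rhat astar (softmax A \<gamma> R) - avg_gap A R astar (softmax A \<gamma> R)))"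
proof -
  define ZR where "ZR = (\<Sum>a\<in>A. exp (\<gamma> * R a))"
  define ZH where "ZH = (\<Sum>a\<in>A. exp (\<gamma> * Rhat a))"
  define \<rho> where "\<rho> = softmax A \<gamma> Rhat"
  define \<mu> where "\<mu> = softmax A \<gamma> R"
  define D where "D a = \<gamma> * (Rhat a - R a)" for a
  define m where "m = (\<Sum>a\<in>A. \<mu> a * D a)"
  have ne: "A \<noteq> {}" using assms(2) by auto
  have ZR: "ZR > 0" unfolding ZR_def using assms(1) ne by (intro sum_pos) auto
  have ZH: "ZH > 0" unfolding ZH_def using assms(1) ne by (intro sum_pos) auto
  have rho: "\<rho> a = exp (\<gamma> * Rhat a) / ZH" for a by (simp add: \<rho>_def softmax_def ZH_def)
  have mu: "\<mu> a = exp (\<gamma> * R a) / ZR" for a by (simp add: \<mu>_def softmax_def ZR_def)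
  have srho: "(\<Sum>a\<in>A. \<rho> a) = 1"
    using ZH by (simp add: rho sum_divide_distrib[symmetric] ZH_def[symmetric])
  have smu: "(\<Sum>a\<in>A. \<mu> a) = 1"
    using ZR by (simp add: mu sum_divide_distrib[symmetric] ZR_def[symmetric])
  have lnr: "ln (\<rho> a / \<mu> a) = D a - ln ZH + ln ZR" for a
  proof -
    have "\<rho> a / \<mu> a = exp (D a) * (ZR / ZH)"
      using ZR ZH by (simp add: rho mu D_def field_simps exp_diff right_diff_distrib)
    thus ?thesis using ZR ZH by (simp add: ln_mult ln_div)
  qed
  have KL: "KL A \<rho> \<mu> = (\<Sum>a\<in>A. \<rho> a * D a) - ln ZH + ln ZR"
  proof -
    have "KL A \<rho> \<mu> = (\<Sum>a\<in>A. \<rho> a * D a + \<rho> a * (ln ZR - ln ZH))"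
      unfolding KL_def lnr by (intro sum.cong) (auto simp: algebra_simps)
    also have "\<dots> = (\<Sum>a\<in>A. \<rho> a * D a) + (ln ZR - ln ZH)"
      by (simp add: sum.distrib sum_distrib_right[symmetric] srho)
    finally show ?thesis by simp
  qed
  have RHS: "\<gamma> * ((avg_gap A R astar \<rho> - avg_gap A Rhat astar \<rho>)
          + (avg_gap A Rhat astar \<mu> - avg_gap A R astar \<mu>))
        = (\<Sum>a\<in>A. \<rho> a * D a) - m"
  proof -
    have e1: "avg_gap A R astar \<rho> - avg_gap A Rhat astar \<rho> = (R astar - Rhat astar) + (\<Sum>a\<in>A. \<rho> a * (Rhat a - R a))"
    proof -
      have "avg_gap A R astar \<rho> - avg_gap A Rhat astar \<rho> = (\<Sum>a\<in>A. \<rho> a * (R astar - Rhat astar) + \<rho> a * (Rhat a - R a))"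
        unfolding avg_gap_def gap_def sum_subtractf[symmetric] by (intro sum.cong) (auto simp: algebra_simps)
      also have "\<dots> = (R astar - Rhat astar) + (\<Sum>a\<in>A. \<rho> a * (Rhat a - R a))"
        by (simp add: sum.distrib sum_distrib_right[symmetric] srho)
      finally show ?thesis .
    qed
    have e2: "avg_gap A Rhat astar \<mu> - avg_gap A R astar \<mu> = (Rhat astar - R astar) - (\<Sum>a\<in>A. \<mu> a * (Rhat a - R a))"
    proof -
      have "avg_gap A Rhat astar \<mu> - avg_gap A R astar \<mu> = (\<Sum>a\<in>A. \<mu> a * (Rhat astar - R astar) - \<mu> a * (Rhat a - R a))"
        unfolding avg_gap_def gap_def sum_subtractf[symmetric] by (intro sum.cong) (auto simp: algebra_simps)
      also have "\<dots> = (Rhat astar - R astar) - (\<Sum>a\<in>A. \<mu> a * (Rhat a - R a))"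
        by (simp add: sum_subtractf sum_distrib_right[symmetric] smu)
      finally show ?thesis .
    qed
    have "\<gamma> * ((avg_gap A R astar \<rho> - avg_gap A Rhat astar \<rho>)
          + (avg_gap A Rhat astar \<mu> - avg_gap A R astar \<mu>))
         = \<gamma> * (\<Sum>a\<in>A. \<rho> a * (Rhat a - R a)) - \<gamma> * (\<Sum>a\<in>A. \<mu> a * (Rhat a - R a))"
      unfolding e1 e2 by (simp add: algebra_simps)
    also have "\<dots> = (\<Sum>a\<in>A. \<rho> a * D a) - m"
      by (simp add: m_def D_def sum_distrib_left algebra_simps)
    finally show ?thesis .
  qed
  have ZHeq: "ZH = ZR * (\<Sum>a\<in>A. \<mu> a * exp (D a))"
  proof -
    have "ZR * (\<Sum>a\<in>A. \<mu> a * exp (D a)) = (\<Sum>a\<in>A. exp (\<gamma> * R a) * exp (D a))"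
      using ZR by (simp add: sum_distrib_left mu)
    also have "\<dots> = ZH" unfolding ZH_def
      by (intro sum.cong) (auto simp: D_def exp_add[symmetric] algebra_simps)
    finally show ?thesis by simp
  qed
  have mu_nn: "\<mu> a \<ge> 0" for a using ZR by (simp add: mu)
  have "(\<Sum>a\<in>A. \<mu> a * exp (D a)) \<ge> exp m"
  proof -
    have "(\<Sum>a\<in>A. \<mu> a * exp (D a)) = exp m * (\<Sum>a\<in>A. \<mu> a * exp (D a - m))"
      by (simp add: sum_distrib_left exp_diff)
    moreover have "(\<Sum>a\<in>A. \<mu> a * exp (D a - m)) \<ge> (\<Sum>a\<in>A. \<mu> a * (1 + (D a - m)))"
      by (intro sum_mono mult_left_mono mu_nn exp_ge_add_one_self)
    moreover have "(\<Sum>a\<in>A. \<mu> a * (1 + (D a - m))) = 1"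
      by (simp add: algebra_simps sum.distrib sum_subtractf smu m_def sum_distrib_right[symmetric])
    ultimately show ?thesis by (metis exp_gt_zero mult_left_mono less_imp_le mult.right_neutral)
  qed
  hence "ZH \<ge> ZR * exp m" using ZHeq ZR by simp
  hence "ln ZH \<ge> ln ZR + m" using ZR ZH
  proof -
    have "ln (ZR * exp m) \<le> ln ZH" using ZR ZH \<open>ZH \<ge> ZR * exp m\<close> by (subst ln_le_cancel_iff) auto
    thus ?thesis using ZR by (simp add: ln_mult)
  qed
  thus ?thesis using KL RHS unfolding \<rho>_def \<mu>_def by linarith
qed

end
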